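(* Let $k\ge2$ and $m\ge1$ be integers and $n=km$. Let $F_k$ be the cumulative distribution function $F_k(x)=\left(\frac nk x\right)^{\frac1{k-1}}$ for $x\in[0,\frac kn]$ and $F_k(x)=1$ for $x\in(\frac kn,1]$. Then there exists a probability distribution of a random vector $(b_1,\dots,b_n)$ such that $\sum_{i=1}^n b_i=1$ and each $b_i$ has distribution $F_k$. *)

theory Defs
  imports "HOL-Probability.Probability"
begin

definition Fk :: "nat \<Rightarrow> nat \<Rightarrow> real \<Rightarrow> real" where
  "Fk k m x = (if x < 0 then 0
     else if x \<le> real k / real (k * m) then (real (k * m) / real k * x) powr (1 / (real k - 1))
     else 1)"

end

theory Submission
  imports Defs
begin


definition Nm :: "real \<Rightarrow> real measure" where
  "Nm a = density lborel (\<lambda>t. ennreal (indicator {0<..} t * t powr (a - 1)))"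

lemma sets_Nm[simp, measurable_cong]: "sets (Nm a) = sets borel"
  by (simp add: Nm_def)

lemma space_Nm[simp]: "space (Nm a) = UNIV"
  by (simp add: Nm_def)

lemma sf_Nm: "sigma_finite_measure (Nm a)"
  unfolding Nm_def
  by (subst sigma_finite_measure.sigma_finite_iff_density_finite[OF sigma_finite_lborel]) auto

lemma nn_integral_Nm:
  assumes [measurable]: "f \<in> borel_measurable borel"
  shows "(\<integral>\<^sup>+t. f t \<partial>Nm a) = (\<integral>\<^sup>+t. ennreal (indicator {0<..} t * t powr (a - 1)) * f t \<partial>lborel)"
  unfolding Nm_def by (subst nn_integral_density) auto

lemma Beta_pos_real: "a > 0 \<Longrightarrow> b > 0 \<Longrightarrow> Beta a b > (0::real)"
  by (simp add: Beta_def)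

lemma beta_inner:
  fixes a b z :: real
  assumes a: "a > 0" and b: "b > 0" and z: "z > 0"
  shows "(\<integral>\<^sup>+s. ennreal (indicator {0<..} s * s powr (b - 1) * (indicator {0<..} (z - s) * (z - s) powr (a - 1))) \<partial>lborel)
         = ennreal (z powr (a + b - 1) * Beta b a)"
proof -
  define h where "h = (\<lambda>s::real. indicator {0<..} s * s powr (b - 1) * (indicator {0<..} (z - s) * (z - s) powr (a - 1)))"
  have [measurable]: "h \<in> borel_measurable borel" unfolding h_def by measurable
  have "(\<integral>\<^sup>+s. ennreal (h s) \<partial>lborel) = (\<integral>\<^sup>+t. ennreal (h (z * t)) \<partial>distr lborel borel ((*) (1/z)))"
    using z by (subst nn_integral_distr) auto
  also have "distr lborel borel ((*) (1 / z)) = density lborel (\<lambda>_. z)"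
    using z by (subst lborel_distr_mult) auto
  also have "(\<integral>\<^sup>+t. ennreal (h (z * t)) \<partial>density lborel (\<lambda>_. z)) = (\<integral>\<^sup>+t. ennreal z * ennreal (h (z * t)) \<partial>lborel)"
    by (subst nn_integral_density) auto
  also have "\<dots> = (\<integral>\<^sup>+t. ennreal (z powr (a + b - 1)) * ennreal (indicator {0..1} t * (t powr (b - 1) * (1 - t) powr (a - 1))) \<partial>lborel)"
  proof (intro nn_integral_cong)
    fix t :: real
    have "z * h (z * t) = z powr (a + b - 1) * (indicator {0..1} t * (t powr (b - 1) * (1 - t) powr (a - 1)))"
    proof (cases "0 < t \<and> t < 1")
      case True
      then have "z * h (z * t) = z * ((z * t) powr (b - 1) * (z * (1 - t)) powr (a - 1))"
        using z by (simp add: h_def indicator_def algebra_simps)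
      also have "\<dots> = z powr (a + b - 1) * (t powr (b - 1) * (1 - t) powr (a - 1))"
      proof -
        have "z * ((z * t) powr (b - 1) * (z * (1 - t)) powr (a - 1))
              = (z powr 1 * z powr (b - 1) * z powr (a - 1)) * (t powr (b - 1) * (1 - t) powr (a - 1))"
          using z True by (simp add: powr_mult)
        also have "z powr 1 * z powr (b - 1) * z powr (a - 1) = z powr (a + b - 1)"
        proof -
          have "z powr 1 * z powr (b - 1) * z powr (a - 1) = z powr (1 + (b - 1) + (a - 1))"
            by (simp only: powr_add)
          then show ?thesis by (simp add: algebra_simps)
        qed
        finally show ?thesis .
      qed
      finally show ?thesis using True by (simp add: indicator_def)
    next
      case False
      then have "t \<le> 0 \<or> t \<ge> 1" by auto
      moreover have "t \<ge> 1 \<Longrightarrow> z \<le> z * t" using z by (metis mult.right_neutral mult_left_mono less_le)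
      ultimately show ?thesis using z
        by (auto simp: h_def indicator_def zero_less_mult_iff)
    qed
    then show "ennreal z * ennreal (h (z * t)) = ennreal (z powr (a + b - 1)) * ennreal (indicator {0..1} t * (t powr (b - 1) * (1 - t) powr (a - 1)))"
      using z by (simp add: ennreal_mult'[symmetric])
  qed
  also have "\<dots> = ennreal (z powr (a + b - 1)) * (\<integral>\<^sup>+t. ennreal (indicator {0..1} t * (t powr (b - 1) * (1 - t) powr (a - 1))) \<partial>lborel)"
    by (subst nn_integral_cmult) auto
  also have "(\<integral>\<^sup>+t. ennreal (indicator {0..1} t * (t powr (b - 1) * (1 - t) powr (a - 1))) \<partial>lborel) = ennreal (Beta b a)"
    using nn_integral_has_integral_lebesgue[OF _ has_integral_Beta_real[OF b a]] by simp
  finally show ?thesis by (simp add: h_def ennreal_mult'[symmetric])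
qed


lemma conv_K:
  fixes a b :: real and f :: "real \<Rightarrow> ennreal"
  assumes a: "a > 0" and b: "b > 0" and [measurable]: "f \<in> borel_measurable borel"
  shows "(\<integral>\<^sup>+s. ennreal (indicator {0<..} s * s powr (b - 1)) *
             (\<integral>\<^sup>+y. ennreal (indicator {0<..} y * y powr (a - 1)) * f (y + s) \<partial>lborel) \<partial>lborel)
       = ennreal (Beta b a) * (\<integral>\<^sup>+z. ennreal (indicator {0<..} z * z powr (a + b - 1)) * f z \<partial>lborel)"
proof -
  have 1: "(\<integral>\<^sup>+y. ennreal (indicator {0<..} y * y powr (a - 1)) * f (y + s) \<partial>lborel)
         = (\<integral>\<^sup>+z. ennreal (indicator {0<..} (z - s) * (z - s) powr (a - 1)) * f z \<partial>lborel)" for s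
  proof -
    have "(\<integral>\<^sup>+z. ennreal (indicator {0<..} (z - s) * (z - s) powr (a - 1)) * f z \<partial>lborel)
        = (\<integral>\<^sup>+z. ennreal (indicator {0<..} (z - s) * (z - s) powr (a - 1)) * f z \<partial>distr lborel borel ((+) s))"
      by (simp add: lborel_distr_plus)
    also have "\<dots> = (\<integral>\<^sup>+y. ennreal (indicator {0<..} y * y powr (a - 1)) * f (y + s) \<partial>lborel)"
      by (subst nn_integral_distr) (auto simp: add.commute)
    finally show ?thesis by simp
  qed
  have "(\<integral>\<^sup>+s. ennreal (indicator {0<..} s * s powr (b - 1)) *
             (\<integral>\<^sup>+y. ennreal (indicator {0<..} y * y powr (a - 1)) * f (y + s) \<partial>lborel) \<partial>lborel)
      = (\<integral>\<^sup>+s. \<integral>\<^sup>+z. ennreal (indicator {0<..} s * s powr (b - 1)) *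
             (ennreal (indicator {0<..} (z - s) * (z - s) powr (a - 1)) * f z) \<partial>lborel \<partial>lborel)"
    by (simp add: 1 nn_integral_cmult)
  also have "\<dots> = (\<integral>\<^sup>+z. \<integral>\<^sup>+s. ennreal (indicator {0<..} s * s powr (b - 1)) *
             (ennreal (indicator {0<..} (z - s) * (z - s) powr (a - 1)) * f z) \<partial>lborel \<partial>lborel)"
    by (subst lborel_pair.Fubini') (auto simp: case_prod_unfold)
  also have "\<dots> = (\<integral>\<^sup>+z. (\<integral>\<^sup>+s. ennreal (indicator {0<..} s * s powr (b - 1) *
             (indicator {0<..} (z - s) * (z - s) powr (a - 1))) \<partial>lborel) * f z \<partial>lborel)"
    by (subst nn_integral_multc[symmetric]) (auto intro!: nn_integral_cong simp: ennreal_mult'[symmetric] mult_ac)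
  also have "\<dots> = (\<integral>\<^sup>+z. ennreal (Beta b a) * (ennreal (indicator {0<..} z * z powr (a + b - 1)) * f z) \<partial>lborel)"
  proof (intro nn_integral_cong)
    fix z :: real
    show "(\<integral>\<^sup>+s. ennreal (indicator {0<..} s * s powr (b - 1) *
             (indicator {0<..} (z - s) * (z - s) powr (a - 1))) \<partial>lborel) * f z
          = ennreal (Beta b a) * (ennreal (indicator {0<..} z * z powr (a + b - 1)) * f z)"
    proof (cases "z > 0")
      case True
      then show ?thesis using beta_inner[OF a b True] Beta_pos_real[OF b a]
        by (simp add: ennreal_mult'[symmetric] mult_ac)
    next
      case False
      then have "(\<integral>\<^sup>+s. ennreal (indicator {0<..} s * s powr (b - 1) *
             (indicator {0<..} (z - s) * (z - s) powr (a - 1))) \<partial>lborel) = 0"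
        by (intro nn_integral_zero') (auto simp: indicator_def)
      then show ?thesis using False by simp
    qed
  qed
  also have "\<dots> = ennreal (Beta b a) * (\<integral>\<^sup>+z. ennreal (indicator {0<..} z * z powr (a + b - 1)) * f z \<partial>lborel)"
    by (subst nn_integral_cmult) auto
  finally show ?thesis .
qed


lemma radial:
  fixes a :: real and I :: "'i set"
  assumes a: "a > 0" and fin: "finite I" and ne: "I \<noteq> {}"
  shows "\<exists>c>0. \<forall>f::real \<Rightarrow> ennreal. f \<in> borel_measurable borel \<longrightarrow>
     (\<integral>\<^sup>+r. (if \<forall>i\<in>I. 0 < r i then f (\<Sum>i\<in>I. r i) else 0) \<partial>PiM I (\<lambda>_. Nm a))
     = ennreal c * (\<integral>\<^sup>+s. ennreal (indicator {0<..} s * s powr (real (card I) * a - 1)) * f s \<partial>lborel)"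
  using fin ne
proof (induction I rule: finite_ne_induct)
  interpret P: product_sigma_finite "\<lambda>_. Nm a"
    by (simp add: product_sigma_finite_def sf_Nm)
  case (singleton i)
  show ?case
  proof (intro exI[of _ 1] conjI allI impI)
    fix f :: "real \<Rightarrow> ennreal"
    assume [measurable]: "f \<in> borel_measurable borel"
    have "(\<integral>\<^sup>+r. (if \<forall>i\<in>{i}. 0 < r i then f (\<Sum>i\<in>{i}. r i) else 0) \<partial>PiM {i} (\<lambda>_. Nm a))
        = (\<integral>\<^sup>+r. (\<lambda>t. if 0 < t then f t else 0) (r i) \<partial>PiM {i} (\<lambda>_. Nm a))"
      by (intro nn_integral_cong) simp
    also have "\<dots> = (\<integral>\<^sup>+t. (if 0 < t then f t else 0) \<partial>Nm a)"
      by (subst P.product_nn_integral_singleton) auto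
    also have "\<dots> = (\<integral>\<^sup>+t. ennreal (indicator {0<..} t * t powr (a - 1)) * (if 0 < t then f t else 0) \<partial>lborel)"
      by (subst nn_integral_Nm) auto
    also have "\<dots> = ennreal 1 * (\<integral>\<^sup>+s. ennreal (indicator {0<..} s * s powr (real (card {i}) * a - 1)) * f s \<partial>lborel)"
      by (auto intro!: nn_integral_cong simp: indicator_def)
    finally show "(\<integral>\<^sup>+r. (if \<forall>i\<in>{i}. 0 < r i then f (\<Sum>i\<in>{i}. r i) else 0) \<partial>PiM {i} (\<lambda>_. Nm a))
        = ennreal 1 * (\<integral>\<^sup>+s. ennreal (indicator {0<..} s * s powr (real (card {i}) * a - 1)) * f s \<partial>lborel)" .
  qed simp
next
  interpret P: product_sigma_finite "\<lambda>_. Nm a"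
    by (simp add: product_sigma_finite_def sf_Nm)
  case (insert i I)
  from insert.IH obtain c where c: "c > 0" and IH: "\<And>f::real \<Rightarrow> ennreal. f \<in> borel_measurable borel \<Longrightarrow>
     (\<integral>\<^sup>+r. (if \<forall>i\<in>I. 0 < r i then f (\<Sum>i\<in>I. r i) else 0) \<partial>PiM I (\<lambda>_. Nm a))
     = ennreal c * (\<integral>\<^sup>+s. ennreal (indicator {0<..} s * s powr (real (card I) * a - 1)) * f s \<partial>lborel)"
    by blast
  define b where "b = real (card I) * a"
  have b: "b > 0" using insert a by (simp add: b_def card_gt_0_iff)
  show ?case
  proof (intro exI[of _ "c * Beta b a"] conjI allI impI)
    show "c * Beta b a > 0" using c Beta_pos_real[OF b a] by simp
    fix f :: "real \<Rightarrow> ennreal"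
    assume [measurable]: "f \<in> borel_measurable borel"
    define g where "g = (\<lambda>s. \<integral>\<^sup>+y. ennreal (indicator {0<..} y * y powr (a - 1)) * f (y + s) \<partial>lborel)"
    have [measurable]: "g \<in> borel_measurable borel"
      unfolding g_def by measurable
    have "(\<integral>\<^sup>+r. (if \<forall>j\<in>insert i I. 0 < r j then f (\<Sum>j\<in>insert i I. r j) else 0) \<partial>PiM (insert i I) (\<lambda>_. Nm a))
        = (\<integral>\<^sup>+x. \<integral>\<^sup>+y. (if \<forall>j\<in>insert i I. 0 < (x(i:=y)) j then f (\<Sum>j\<in>insert i I. (x(i:=y)) j) else 0) \<partial>Nm a \<partial>PiM I (\<lambda>_. Nm a))"
      using insert by (subst P.product_nn_integral_insert) auto
    also have "\<dots> = (\<integral>\<^sup>+x. (if \<forall>j\<in>I. 0 < x j then g (\<Sum>j\<in>I. x j) else 0) \<partial>PiM I (\<lambda>_. Nm a))"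
    proof (intro nn_integral_cong)
      fix x assume "x \<in> space (PiM I (\<lambda>_. Nm a))"
      have s: "(\<Sum>j\<in>insert i I. (x(i:=y)) j) = y + (\<Sum>j\<in>I. x j)" for y
        using insert by (simp add: sum.insert) (intro sum.cong, auto)
      have p: "(\<forall>j\<in>insert i I. 0 < (x(i:=y)) j) \<longleftrightarrow> 0 < y \<and> (\<forall>j\<in>I. 0 < x j)" for y
        using insert by auto
      show "(\<integral>\<^sup>+y. (if \<forall>j\<in>insert i I. 0 < (x(i:=y)) j then f (\<Sum>j\<in>insert i I. (x(i:=y)) j) else 0) \<partial>Nm a)
          = (if \<forall>j\<in>I. 0 < x j then g (\<Sum>j\<in>I. x j) else 0)"
      proof (cases "\<forall>j\<in>I. 0 < x j")
        case True
        then show ?thesis unfolding s p g_def by (subst nn_integral_Nm) (auto intro!: nn_integral_cong simp: indicator_def)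
      next
        case False
        then have ff: "(0 < y \<and> (\<forall>j\<in>I. 0 < x j)) = False" for y by simp
        show ?thesis unfolding s p ff using False by auto
      qed
    qed
    also have "\<dots> = ennreal c * (\<integral>\<^sup>+s. ennreal (indicator {0<..} s * s powr (b - 1)) * g s \<partial>lborel)"
      using IH[of g] by (simp add: b_def)
    also have "(\<integral>\<^sup>+s. ennreal (indicator {0<..} s * s powr (b - 1)) * g s \<partial>lborel)
        = ennreal (Beta b a) * (\<integral>\<^sup>+z. ennreal (indicator {0<..} z * z powr (a + b - 1)) * f z \<partial>lborel)"
      unfolding g_def by (rule conv_K[OF a b]) simp
    also have "a + b - 1 = real (card (insert i I)) * a - 1"
      using insert by (simp add: b_def algebra_simps)
    finally show "(\<integral>\<^sup>+r. (if \<forall>j\<in>insert i I. 0 < r j then f (\<Sum>j\<in>insert i I. r j) else 0) \<partial>PiM (insert i I) (\<lambda>_. Nm a))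
        = ennreal (c * Beta b a) * (\<integral>\<^sup>+s. ennreal (indicator {0<..} s * s powr (real (card (insert i I)) * a - 1)) * f s \<partial>lborel)"
      using c Beta_pos_real[OF b a] by (simp add: ennreal_mult mult.assoc)
  qed
qed


lemma powr_m1_mult: "u > 0 \<Longrightarrow> u powr (a - 1) * u = u powr (a::real)"
proof -
  assume u: "u > 0"
  have "u powr (a - 1) * u powr 1 = u powr (a - 1 + 1)" by (simp only: powr_add)
  then show ?thesis using u by simp
qed

lemma H_calc:
  fixes a y :: real
  assumes a: "a > 0" and y0: "0 \<le> y" and y1: "y \<le> 1"
  shows "(\<integral>\<^sup>+s. ennreal (indicator {0<..} s) *
            (\<integral>\<^sup>+u. ennreal (indicator {0<..} u * u powr (a - 1)) *
                 indicator {u. u + s \<le> 1 \<and> u \<le> y * (u + s)} u \<partial>lborel) \<partial>lborel)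
         = ennreal (y powr a / (a * (a + 1)))"
proof (cases "y = 0")
  case True
  have inner: "(\<integral>\<^sup>+u. ennreal (indicator {0<..} u * u powr (a - 1)) *
                 indicator {u. u + s \<le> 1 \<and> u \<le> y * (u + s)} u \<partial>lborel) = 0" for s
    using True by (intro nn_integral_zero' AE_I2) (auto simp: indicator_def)
  have "(\<integral>\<^sup>+s. ennreal (indicator {0<..} s) *
            (\<integral>\<^sup>+u. ennreal (indicator {0<..} u * u powr (a - 1)) *
                 indicator {u. u + s \<le> 1 \<and> u \<le> y * (u + s)} u \<partial>lborel) \<partial>lborel) = 0"
    by (rule nn_integral_zero', rule AE_I2, unfold inner) simp
  then show ?thesis using True by simp
next
  case False
  then have y: "y > 0" using y0 by simp
  have "(\<integral>\<^sup>+s. ennreal (indicator {0<..} s) *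
            (\<integral>\<^sup>+u. ennreal (indicator {0<..} u * u powr (a - 1)) *
                 indicator {u. u + s \<le> 1 \<and> u \<le> y * (u + s)} u \<partial>lborel) \<partial>lborel)
      = (\<integral>\<^sup>+s. \<integral>\<^sup>+u. ennreal (indicator {0<..} u * u powr (a - 1)) *
                 indicator {s. 0 < s \<and> u + s \<le> 1 \<and> u \<le> y * (u + s)} s \<partial>lborel \<partial>lborel)"
    by (subst nn_integral_cmult[symmetric]) (auto intro!: nn_integral_cong simp: indicator_def)
  also have "\<dots> = (\<integral>\<^sup>+u. \<integral>\<^sup>+s. ennreal (indicator {0<..} u * u powr (a - 1)) *
                 indicator {s. 0 < s \<and> u + s \<le> 1 \<and> u \<le> y * (u + s)} s \<partial>lborel \<partial>lborel)"
    by (subst lborel_pair.Fubini') (auto simp: case_prod_unfold)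
  also have "\<dots> = (\<integral>\<^sup>+u. ennreal (indicator {0<..} u * u powr (a - 1)) *
                 emeasure lborel {s. 0 < s \<and> u + s \<le> 1 \<and> u \<le> y * (u + s)} \<partial>lborel)"
    by (subst nn_integral_cmult) auto
  also have "\<dots> = (\<integral>\<^sup>+u. ennreal (indicator {0..y} u * (u powr (a - 1) - u powr a / y)) \<partial>lborel)"
  proof (intro nn_integral_cong)
    fix u :: real
    show "ennreal (indicator {0<..} u * u powr (a - 1)) *
                 emeasure lborel {s. 0 < s \<and> u + s \<le> 1 \<and> u \<le> y * (u + s)}
          = ennreal (indicator {0..y} u * (u powr (a - 1) - u powr a / y))"
    proof (cases "u > 0")
      case False
      then show ?thesis by (cases "u = 0") (auto simp: indicator_def)
    next
      case u: True
      define l where "l = u * (1 - y) / y"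
      define h where "h = 1 - u"
      have l0: "l \<ge> 0" using u y y1 by (simp add: l_def)
      have eqv: "u \<le> y * (u + s) \<longleftrightarrow> l \<le> s" for s
        using y by (simp add: l_def field_simps)
      have sub1: "{l<..h} \<subseteq> {s. 0 < s \<and> u + s \<le> 1 \<and> u \<le> y * (u + s)}"
        using l0 by (auto simp: eqv h_def)
      have sub2: "{s. 0 < s \<and> u + s \<le> 1 \<and> u \<le> y * (u + s)} \<subseteq> {l..h}"
        by (auto simp: eqv h_def)
      have hl: "h - l = 1 - u / y" using y by (simp add: h_def l_def field_simps)
      have em: "emeasure lborel {s. 0 < s \<and> u + s \<le> 1 \<and> u \<le> y * (u + s)} = ennreal (max 0 (1 - u / y))"
      proof (cases "l \<le> h")
        case True
        have "emeasure lborel {l<..h} \<le> emeasure lborel {s. 0 < s \<and> u + s \<le> 1 \<and> u \<le> y * (u + s)}"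
          by (rule emeasure_mono[OF sub1]) auto
        moreover have "emeasure lborel {s. 0 < s \<and> u + s \<le> 1 \<and> u \<le> y * (u + s)} \<le> emeasure lborel {l..h}"
          by (rule emeasure_mono[OF sub2]) auto
        ultimately show ?thesis using True hl by (simp add: max_def)
      next
        case False
        then have "{l..h} = {}" by auto
        then have "{s. 0 < s \<and> u + s \<le> 1 \<and> u \<le> y * (u + s)} = {}" using sub2 by auto
        then have "emeasure lborel {s. 0 < s \<and> u + s \<le> 1 \<and> u \<le> y * (u + s)} = 0"
          by (simp only: emeasure_empty)
        moreover have "max 0 (1 - u / y) = 0" using False hl by (simp add: max_def)
        ultimately show ?thesis by simp
      qed
      have pa: "u powr a = u powr (a - 1) * u"
        using u by (simp add: powr_m1_mult)
      show ?thesis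
      proof (cases "u \<le> y")
        case True
        then have "max 0 (1 - u / y) = 1 - u / y" using y by (simp add: field_simps)
        moreover have "u powr (a - 1) * (1 - u / y) = u powr (a - 1) - u powr a / y"
          using pa by (simp add: algebra_simps)
        ultimately show ?thesis using u True em
          by (simp add: indicator_def ennreal_mult'[symmetric])
      next
        case False
        then have "max 0 (1 - u / y) = 0" using y by (simp add: field_simps)
        then show ?thesis using u False em by (simp add: indicator_def)
      qed
    qed
  qed
  also have "\<dots> = ennreal (y powr (a - 1 + 1) / (a - 1 + 1) - (y powr (a + 1) / (a + 1)) / y)"
  proof (rule nn_integral_has_integral_lebesgue)
    show "\<And>x. x \<in> {0..y} \<Longrightarrow> 0 \<le> x powr (a - 1) - x powr a / y"
    proof -
      fix x assume x: "x \<in> {0..y}"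
      show "0 \<le> x powr (a - 1) - x powr a / y"
      proof (cases "x = 0")
        case False
        then have "x powr a = x powr (a - 1) * x" using x by (simp add: powr_m1_mult)
        moreover have "x powr (a - 1) * x / y \<le> x powr (a - 1)"
          using x y by (simp add: field_simps mult_right_mono)
        ultimately show ?thesis by simp
      qed simp
    qed
    show "((\<lambda>x. x powr (a - 1) - x powr a / y) has_integral
           y powr (a - 1 + 1) / (a - 1 + 1) - y powr (a + 1) / (a + 1) / y) {0..y}"
      by (intro has_integral_diff has_integral_powr_from_0 has_integral_divide) (use a y in auto)
  qed
  also have "y powr (a - 1 + 1) / (a - 1 + 1) - (y powr (a + 1) / (a + 1)) / y = y powr a / (a * (a + 1))"
  proof -
    have e: "y powr (a + 1) / (a + 1) / y = y powr a / (a + 1)" using y by (simp add: powr_add)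
    have g: "P / a - P / (a + 1) = P / (a * (a + 1))" for P using a by (simp add: field_simps)
    show ?thesis unfolding e using g by simp
  qed
  finally show ?thesis .
qed


lemma marg:
  fixes k j :: nat
  assumes k: "k \<ge> 2" and j: "j < k"
  shows "\<exists>c>0. \<forall>y. 0 \<le> y \<longrightarrow> y \<le> 1 \<longrightarrow>
    (\<integral>\<^sup>+x. indicator {x. (\<forall>i\<in>{..<k}. 0 < x i) \<and> (\<Sum>i<k. x i) \<le> 1 \<and> x j \<le> y * (\<Sum>i<k. x i)} x
        \<partial>PiM {..<k} (\<lambda>_. Nm (1 / (real k - 1))))
    = ennreal (c * y powr (1 / (real k - 1)))"
proof -
  define a where "a = 1 / (real k - 1)"
  have a: "a > 0" using k by (simp add: a_def)
  define I where "I = {..<k} - {j}"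
  have finI: "finite I" by (simp add: I_def)
  have cardI: "card I = k - 1" using j by (simp add: I_def)
  have neI: "I \<noteq> {}"
  proof
    assume "I = {}"
    then have "card I = 0" by simp
    with cardI k show False by simp
  qed
  have ex0: "real (card I) * a - 1 = 0" using k cardI by (simp add: a_def of_nat_diff)
  have KI: "{..<k} = insert j I" using j by (auto simp: I_def)
  have jI: "j \<notin> I" by (simp add: I_def)
  interpret P: product_sigma_finite "\<lambda>_. Nm a"
    by (simp add: product_sigma_finite_def sf_Nm)
  obtain c where c: "c > 0" and rad: "\<And>f::real \<Rightarrow> ennreal. f \<in> borel_measurable borel \<Longrightarrow>
     (\<integral>\<^sup>+r. (if \<forall>i\<in>I. 0 < r i then f (\<Sum>i\<in>I. r i) else 0) \<partial>PiM I (\<lambda>_. Nm a))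
     = ennreal c * (\<integral>\<^sup>+s. ennreal (indicator {0<..} s * s powr (real (card I) * a - 1)) * f s \<partial>lborel)"
    using radial[OF a finI neI] by blast
  show ?thesis
  proof (intro exI[of _ "c / (a * (a + 1))"] conjI allI impI)
    show "c / (a * (a + 1)) > 0" using a c by simp
    fix y :: real assume y0: "0 \<le> y" and y1: "y \<le> 1"
    define G where "G = (\<lambda>s. \<integral>\<^sup>+u. ennreal (indicator {0<..} u * u powr (a - 1)) *
                 indicator {u. u + s \<le> 1 \<and> u \<le> y * (u + s)} u \<partial>lborel)"
    have [measurable]: "G \<in> borel_measurable borel" unfolding G_def by measurable
    have "(\<integral>\<^sup>+x. indicator {x. (\<forall>i\<in>{..<k}. 0 < x i) \<and> (\<Sum>i<k. x i) \<le> 1 \<and> x j \<le> y * (\<Sum>i<k. x i)} x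
        \<partial>PiM {..<k} (\<lambda>_. Nm a))
      = (\<integral>\<^sup>+x. indicator {x. (\<forall>i\<in>insert j I. 0 < x i) \<and> (\<Sum>i\<in>insert j I. x i) \<le> 1 \<and> x j \<le> y * (\<Sum>i\<in>insert j I. x i)} x
        \<partial>PiM (insert j I) (\<lambda>_. Nm a))"
      by (simp only: KI)
    also have "\<dots> = (\<integral>\<^sup>+r. \<integral>\<^sup>+u. indicator {x. (\<forall>i\<in>insert j I. 0 < x i) \<and> (\<Sum>i\<in>insert j I. x i) \<le> 1 \<and> x j \<le> y * (\<Sum>i\<in>insert j I. x i)} (r(j:=u))
        \<partial>Nm a \<partial>PiM I (\<lambda>_. Nm a))"
    proof (rule P.product_nn_integral_insert[OF finI jI])
      have [measurable]: "(\<lambda>x. x j) \<in> borel_measurable (PiM (insert j I) (\<lambda>i. (borel :: real measure)))"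
        by (rule measurable_component_singleton) simp
      have [measurable]: "(\<lambda>x. \<Sum>i\<in>insert j I. x i) \<in> borel_measurable (PiM (insert j I) (\<lambda>i. (borel :: real measure)))"
        by measurable
      have [measurable]: "(\<lambda>x. y * (\<Sum>i\<in>insert j I. x i)) \<in> borel_measurable (PiM (insert j I) (\<lambda>i. (borel :: real measure)))"
        by measurable
      have "{x \<in> space (PiM (insert j I) (\<lambda>i. (borel :: real measure))). x j \<le> y * (\<Sum>i\<in>insert j I. x i)} \<in> sets (PiM (insert j I) (\<lambda>i. (borel :: real measure)))"
        by (rule borel_measurable_le) measurable
      then have [measurable]: "Measurable.pred (PiM (insert j I) (\<lambda>i. (borel :: real measure))) (\<lambda>x. x j \<le> y * (\<Sum>i\<in>insert j I. x i))"
        by (simp add: pred_def)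
      have [measurable]: "Measurable.pred (PiM (insert j I) (\<lambda>i. borel)) (\<lambda>x. \<forall>i\<in>insert j I. 0 < (x i::real))"
        using finI by (intro pred_intros_finite) (auto intro!: measurable_component_singleton)
      have "indicator {x. (\<forall>i\<in>insert j I. 0 < x i) \<and> (\<Sum>i\<in>insert j I. x i) \<le> 1 \<and> x j \<le> y * (\<Sum>i\<in>insert j I. x i)}
           \<in> borel_measurable (PiM (insert j I) (\<lambda>_. borel))"
        by measurable
      moreover have "sets (PiM (insert j I) (\<lambda>_. Nm a)) = sets (PiM (insert j I) (\<lambda>_. borel))"
        by (intro sets_PiM_cong) auto
      ultimately show "indicator {x. (\<forall>i\<in>insert j I. 0 < x i) \<and> (\<Sum>i\<in>insert j I. x i) \<le> 1 \<and> x j \<le> y * (\<Sum>i\<in>insert j I. x i)}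
           \<in> borel_measurable (PiM (insert j I) (\<lambda>_. Nm a))"
        by (simp cong: measurable_cong_sets)
    qed
    also have "\<dots> = (\<integral>\<^sup>+r. (if \<forall>i\<in>I. 0 < r i then G (\<Sum>i\<in>I. r i) else 0) \<partial>PiM I (\<lambda>_. Nm a))"
    proof (intro nn_integral_cong)
      fix r assume "r \<in> space (PiM I (\<lambda>_. Nm a))"
      have s: "(\<Sum>i\<in>insert j I. (r(j:=u)) i) = u + (\<Sum>i\<in>I. r i)" for u
        using jI finI by (simp add: sum.insert) (intro sum.cong, auto)
      have p: "(\<forall>i\<in>insert j I. 0 < (r(j:=u)) i) \<longleftrightarrow> 0 < u \<and> (\<forall>i\<in>I. 0 < r i)" for u
        using jI by auto
      have e: "indicator {x. (\<forall>i\<in>insert j I. 0 < x i) \<and> (\<Sum>i\<in>insert j I. x i) \<le> 1 \<and> x j \<le> y * (\<Sum>i\<in>insert j I. x i)} (r(j:=u))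
          = (if \<forall>i\<in>I. 0 < r i then indicator {u. 0 < u \<and> u + (\<Sum>i\<in>I. r i) \<le> 1 \<and> u \<le> y * (u + (\<Sum>i\<in>I. r i))} u else (0::ennreal))" for u
        using s[of u] p[of u] jI by (auto simp: indicator_def split: if_splits)
      show "(\<integral>\<^sup>+u. indicator {x. (\<forall>i\<in>insert j I. 0 < x i) \<and> (\<Sum>i\<in>insert j I. x i) \<le> 1 \<and> x j \<le> y * (\<Sum>i\<in>insert j I. x i)} (r(j:=u)) \<partial>Nm a)
          = (if \<forall>i\<in>I. 0 < r i then G (\<Sum>i\<in>I. r i) else 0)"
      proof (cases "\<forall>i\<in>I. 0 < r i")
        case True
        show ?thesis unfolding e G_def using True
          by (subst nn_integral_Nm) (auto intro!: nn_integral_cong simp: indicator_def)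
      next
        case False
        show ?thesis unfolding e using False by (simp only: if_False) simp
      qed
    qed
    also have "\<dots> = ennreal c * (\<integral>\<^sup>+s. ennreal (indicator {0<..} s * s powr (real (card I) * a - 1)) * G s \<partial>lborel)"
      by (rule rad) simp
    also have "(\<integral>\<^sup>+s. ennreal (indicator {0<..} s * s powr (real (card I) * a - 1)) * G s \<partial>lborel)
             = (\<integral>\<^sup>+s. ennreal (indicator {0<..} s) * G s \<partial>lborel)"
      unfolding ex0 by (intro nn_integral_cong) (auto simp: indicator_def)
    also have "\<dots> = ennreal (y powr a / (a * (a + 1)))"
      unfolding G_def by (rule H_calc[OF a y0 y1])
    finally show "(\<integral>\<^sup>+x. indicator {x. (\<forall>i\<in>{..<k}. 0 < x i) \<and> (\<Sum>i<k. x i) \<le> 1 \<and> x j \<le> y * (\<Sum>i<k. x i)} x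
        \<partial>PiM {..<k} (\<lambda>_. Nm (1 / (real k - 1))))
      = ennreal (c / (a * (a + 1)) * y powr (1 / (real k - 1)))"
      using c a by (simp add: a_def[symmetric] ennreal_mult'[symmetric] mult_ac)
  qed
qed




lemma sum_mod_blocks:
  fixes f :: "nat \<Rightarrow> real"
  shows "(\<Sum>i<k*m. f (i mod k)) = real m * (\<Sum>j<k. f j)"
proof (induction m)
  case 0
  then show ?case by simp
next
  case (Suc m)
  have u: "{..<k * Suc m} = {..<k*m} \<union> {k*m..<k*m+k}" by auto
  have d: "{..<k*m} \<inter> {k*m..<k*m+k} = {}" by auto
  have s2: "(\<Sum>i\<in>{k*m..<k*m+k}. f (i mod k)) = (\<Sum>j<k. f j)"
  proof -
    have "(\<Sum>i\<in>{k*m..<k*m+k}. f (i mod k)) = (\<Sum>j\<in>{0..<k}. f ((j + k*m) mod k))"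
      using sum.shift_bounds_nat_ivl[of "\<lambda>i. f (i mod k)" 0 "k*m" k] by (simp add: add.commute)
    also have "\<dots> = (\<Sum>j\<in>{0..<k}. f j)"
      by (intro sum.cong) auto
    finally show ?thesis by (simp add: atLeast0LessThan)
  qed
  show ?case
    unfolding u using d Suc s2 by (simp add: sum.union_disjoint algebra_simps)
qed

theorem lemma3p4:
  fixes k m :: nat
  assumes "k \<ge> 2" and "m \<ge> 1"
  shows "\<exists>M. prob_space M \<and>
           sets M = sets (PiM {..<k * m} (\<lambda>_. (borel :: real measure))) \<and>
           (AE b in M. (\<Sum>i<k * m. b i) = 1) \<and>
           (\<forall>i<k * m. \<forall>x. cdf (distr M borel (\<lambda>b. b i)) x = Fk k m x)"
proof -
  define a where "a = 1 / (real k - 1)"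
  have a: "a > 0" using assms(1) by (simp add: a_def)
  have k0: "0 < k" using assms(1) by simp
  have m0: "real m > 0" using assms(2) by simp
  define \<nu> where "\<nu> = PiM {..<k} (\<lambda>_. Nm a)"
  have sets_\<nu>: "sets \<nu> = sets (PiM {..<k} (\<lambda>_. (borel::real measure)))"
    unfolding \<nu>_def by (intro sets_PiM_cong) auto
  have space_\<nu>: "space \<nu> = space (PiM {..<k} (\<lambda>_. (borel::real measure)))"
    using sets_eq_imp_space_eq[OF sets_\<nu>] .
  define Qs :: "nat \<Rightarrow> real \<Rightarrow> (nat \<Rightarrow> real) set"
    where "Qs j y = {x. (\<forall>i\<in>{..<k}. 0 < x i) \<and> (\<Sum>i<k. x i) \<le> 1 \<and> x j \<le> y * (\<Sum>i<k. x i)}" for j y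
  define T where "T = {x. (\<forall>i\<in>{..<k}. 0 < x i) \<and> (\<Sum>i<k. x i) \<le> (1::real)}"
  have le_S: "x j \<le> (\<Sum>i<k. x i)" if "j < k" "\<forall>i\<in>{..<k}. 0 < x i" for j and x :: "nat \<Rightarrow> real"
    using member_le_sum[of j "{..<k}" x] that by (auto simp: less_imp_le)
  have S_pos: "0 < (\<Sum>i<k. x i)" if "\<forall>i\<in>{..<k}. 0 < x i" for x :: "nat \<Rightarrow> real"
    using le_S[OF k0 that] that k0 by force
  have QT: "Qs j 1 = T" if "j < k" for j
    using le_S[OF that] unfolding Qs_def T_def by auto
  have cj: "\<exists>c>0. \<forall>y. 0 \<le> y \<longrightarrow> y \<le> 1 \<longrightarrow> (\<integral>\<^sup>+x. indicator (Qs j y) x \<partial>\<nu>) = ennreal (c * y powr a)"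
    if "j < k" for j
    using marg[OF assms(1) that] unfolding Qs_def \<nu>_def a_def .
  obtain Z where Z: "Z > 0" and Z0: "\<And>y. 0 \<le> y \<Longrightarrow> y \<le> 1 \<Longrightarrow> (\<integral>\<^sup>+x. indicator (Qs 0 y) x \<partial>\<nu>) = ennreal (Z * y powr a)"
    using cj[OF k0] by blast
  have intT: "(\<integral>\<^sup>+x. indicator T x \<partial>\<nu>) = ennreal Z" using Z0[of 1] QT[OF k0] by simp
  have Qj: "(\<integral>\<^sup>+x. indicator (Qs j y) x \<partial>\<nu>) = ennreal (Z * y powr a)" if "j < k" "0 \<le> y" "y \<le> 1" for j y
  proof -
    obtain c where c: "c > 0" and hc: "\<And>y. 0 \<le> y \<Longrightarrow> y \<le> 1 \<Longrightarrow> (\<integral>\<^sup>+x. indicator (Qs j y) x \<partial>\<nu>) = ennreal (c * y powr a)"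
      using cj[OF \<open>j<k\<close>] by blast
    have "ennreal c = ennreal Z" using hc[of 1] QT[OF \<open>j<k\<close>] intT by simp
    then have "c = Z" using c Z by simp
    then show ?thesis using hc that by simp
  qed
  have comp_m[measurable]: "(\<lambda>x. x j) \<in> borel_measurable (PiM {..<k} (\<lambda>_. (borel::real measure)))" if "j < k" for j
    using that by (intro measurable_component_singleton) simp
  have S_m[measurable]: "(\<lambda>x. \<Sum>i<k. x i) \<in> borel_measurable (PiM {..<k} (\<lambda>_. (borel::real measure)))"
    by measurable
  have posm[measurable]: "Measurable.pred (PiM {..<k} (\<lambda>_. (borel::real measure))) (\<lambda>x. \<forall>i\<in>{..<k}. 0 < (x i::real))"
    by (intro pred_intros_finite) (auto intro!: measurable_component_singleton)
  have Tm[measurable]: "(indicator T :: (nat \<Rightarrow> real) \<Rightarrow> ennreal) \<in> borel_measurable (PiM {..<k} (\<lambda>_. (borel::real measure)))"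
    unfolding T_def by measurable
  have "(\<lambda>x. ennreal (1/Z) * indicator T x) \<in> borel_measurable (PiM {..<k} (\<lambda>_. (borel::real measure)))"
    by measurable
  then have indT_meas: "(\<lambda>x. ennreal (1/Z) * indicator T x) \<in> borel_measurable \<nu>"
    by (simp cong: measurable_cong_sets add: sets_\<nu>)
  define D where "D = density \<nu> (\<lambda>x. ennreal (1/Z) * indicator T x)"
  have sets_D: "sets D = sets (PiM {..<k} (\<lambda>_. (borel::real measure)))" by (simp add: D_def sets_\<nu>)
  have space_D: "space D = space \<nu>" by (simp add: D_def)
  have emD: "emeasure D B = ennreal (1/Z) * (\<integral>\<^sup>+x. indicator T x * indicator B x \<partial>\<nu>)" if "B \<in> sets \<nu>" for B
  proof -
    have Tn: "(indicator T :: (nat \<Rightarrow> real) \<Rightarrow> ennreal) \<in> borel_measurable \<nu>"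
      using Tm by (simp cong: measurable_cong_sets add: sets_\<nu>)
    have Bn: "(indicator B :: (nat \<Rightarrow> real) \<Rightarrow> ennreal) \<in> borel_measurable \<nu>"
      using that by simp
    have "emeasure D B = (\<integral>\<^sup>+x. (ennreal (1/Z) * indicator T x) * indicator B x \<partial>\<nu>)"
      unfolding D_def using that indT_meas by (simp add: emeasure_density)
    also have "\<dots> = (\<integral>\<^sup>+x. ennreal (1/Z) * (indicator T x * indicator B x) \<partial>\<nu>)"
      by (simp add: mult.assoc)
    also have "\<dots> = ennreal (1/Z) * (\<integral>\<^sup>+x. indicator T x * indicator B x \<partial>\<nu>)"
      using Tn Bn by (intro nn_integral_cmult) simp
    finally show ?thesis .
  qed
  have probD: "prob_space D"
  proof (rule prob_spaceI)
    have "emeasure D (space D) = ennreal (1/Z) * (\<integral>\<^sup>+x. indicator T x * indicator (space \<nu>) x \<partial>\<nu>)"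
      unfolding space_D by (rule emD) simp
    also have "(\<integral>\<^sup>+x. indicator T x * indicator (space \<nu>) x \<partial>\<nu>) = (\<integral>\<^sup>+x. indicator T x \<partial>\<nu>)"
      by (intro nn_integral_cong) simp
    finally show "emeasure D (space D) = 1" using intT Z by (simp add: ennreal_mult'[symmetric])
  qed
  define \<Phi> where "\<Phi> = (\<lambda>x. \<lambda>i\<in>{..<k*m}. x (i mod k) / (real m * (\<Sum>j<k. x j)))"
  have \<Phi>m0: "\<Phi> \<in> measurable (PiM {..<k} (\<lambda>_. (borel::real measure))) (PiM {..<k*m} (\<lambda>_. (borel::real measure)))"
    unfolding \<Phi>_def
  proof (rule measurable_restrict)
    fix i assume "i \<in> {..<k*m}"
    have "i mod k < k" using k0 by simp
    then show "(\<lambda>x. x (i mod k) / (real m * (\<Sum>j<k. x j))) \<in> borel_measurable (PiM {..<k} (\<lambda>_. (borel::real measure)))"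
      by measurable
  qed
  have \<Phi>m: "\<Phi> \<in> measurable D (PiM {..<k*m} (\<lambda>_. (borel::real measure)))"
    using \<Phi>m0 by (simp cong: measurable_cong_sets add: sets_D)
  define M where "M = distr D (PiM {..<k*m} (\<lambda>_. (borel::real measure))) \<Phi>"
  have sets_M: "sets M = sets (PiM {..<k * m} (\<lambda>_. (borel :: real measure)))" by (simp add: M_def)
  have spM: "space M = space (PiM {..<k * m} (\<lambda>_. (borel :: real measure)))" by (simp add: M_def)
  show ?thesis
  proof (intro exI[of _ M] conjI allI impI)
    show "prob_space M" unfolding M_def by (rule prob_space.prob_space_distr[OF probD \<Phi>m])
    show "sets M = sets (PiM {..<k * m} (\<lambda>_. (borel :: real measure)))" by (rule sets_M)
    have "AE x in D. (\<Sum>i<k*m. \<Phi> x i) = 1"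
      unfolding D_def
    proof (subst AE_density[OF indT_meas], rule AE_I2, intro impI)
      fix x assume "0 < ennreal (1 / Z) * indicator T x"
      then have xT: "x \<in> T" by (cases "x \<in> T") auto
      then have pos: "\<forall>i\<in>{..<k}. 0 < x i" by (simp add: T_def)
      have "(\<Sum>i<k*m. \<Phi> x i) = (\<Sum>i<k*m. x (i mod k) / (real m * (\<Sum>j<k. x j)))"
        unfolding \<Phi>_def by (intro sum.cong) auto
      also have "\<dots> = (\<Sum>i<k*m. x (i mod k)) / (real m * (\<Sum>j<k. x j))"
        by (simp add: sum_divide_distrib)
      also have "\<dots> = 1"
        using sum_mod_blocks[of x k m] S_pos[OF pos] m0 by simp
      finally show "(\<Sum>i<k*m. \<Phi> x i) = 1" .
    qed
    moreover have "Measurable.pred (PiM {..<k*m} (\<lambda>_. (borel::real measure))) (\<lambda>b. (\<Sum>i<k*m. b i) = 1)"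
      by measurable
    ultimately show "AE b in M. (\<Sum>i<k * m. b i) = 1"
      unfolding M_def by (subst AE_distr_iff[OF \<Phi>m]) (auto simp: pred_def)
  next
    fix i t assume i: "i < k * m"
    define j where "j = i mod k"
    have j: "j < k" using k0 by (simp add: j_def)
    have ci: "(\<lambda>b. b i) \<in> measurable M borel"
      using i by (simp cong: measurable_cong_sets add: sets_M measurable_component_singleton)
    define B where "B = {x \<in> space \<nu>. x j / (real m * (\<Sum>i<k. x i)) \<le> t}"
    have Bs: "B \<in> sets \<nu>"
    proof -
      have "Measurable.pred (PiM {..<k} (\<lambda>_. (borel::real measure))) (\<lambda>x. x j / (real m * (\<Sum>i<k. x i)) \<le> t)"
        using j by measurable
      then show ?thesis unfolding B_def pred_def using sets_\<nu> space_\<nu> by simp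
    qed
    have pre: "\<Phi> -` ((\<lambda>b. b i) -` {..t} \<inter> space M) \<inter> space D = B"
    proof -
      have "\<Phi> x \<in> space M" if "x \<in> space D" for x
        using measurable_space[OF \<Phi>m that] sets_eq_imp_space_eq[OF sets_M] by simp
      then show ?thesis using i unfolding B_def space_D \<Phi>_def j_def by auto
    qed
    have "cdf (distr M borel (\<lambda>b. b i)) t = measure M ((\<lambda>b. b i) -` {..t} \<inter> space M)"
      unfolding cdf_def by (subst measure_distr[OF ci]) auto
    also have "\<dots> = measure D B"
    proof -
      have "(\<lambda>b. b i) -` {..t} \<inter> space M \<in> sets (PiM {..<k*m} (\<lambda>_. (borel::real measure)))"
        using measurable_sets[OF ci, of "{..t}"] sets_M by simp
      then show ?thesis using pre unfolding spM by (simp add: M_def measure_distr[OF \<Phi>m])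
    qed
    also have "\<dots> = enn2real (ennreal (1/Z) * (\<integral>\<^sup>+x. indicator T x * indicator B x \<partial>\<nu>))"
      unfolding measure_def using emD[OF Bs] by simp
    also have "\<dots> = Fk k m t"
    proof (cases "t < 0")
      case True
      have "(\<integral>\<^sup>+x. indicator T x * indicator B x \<partial>\<nu>) = 0"
      proof (rule nn_integral_zero', rule AE_I2)
        fix x assume "x \<in> space \<nu>"
        show "indicator T x * indicator B x = (0::ennreal)"
        proof (cases "x \<in> T")
          case True
          then have pos: "\<forall>i\<in>{..<k}. 0 < x i" by (simp add: T_def)
          have "0 < x j / (real m * (\<Sum>i<k. x i))"
            using pos j S_pos[OF pos] m0 by simp
          then have "x \<notin> B" using \<open>t < 0\<close> unfolding B_def by auto
          then show ?thesis by simp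
        qed simp
      qed
      then show ?thesis using True by (simp add: Fk_def)
    next
      case False
      define y where "y = min (real m * t) 1"
      have y0: "0 \<le> y" and y1: "y \<le> 1" using False m0 by (auto simp: y_def)
      have "(\<integral>\<^sup>+x. indicator T x * indicator B x \<partial>\<nu>) = (\<integral>\<^sup>+x. indicator (Qs j y) x \<partial>\<nu>)"
      proof (rule nn_integral_cong)
        fix x assume x: "x \<in> space \<nu>"
        have "(x \<in> T \<and> x \<in> B) \<longleftrightarrow> x \<in> Qs j y"
        proof (cases "x \<in> T")
          case True
          then have pos: "\<forall>i\<in>{..<k}. 0 < x i" by (simp add: T_def)
          define S where "S = (\<Sum>i<k. x i)"
          have Sp: "S > 0" using S_pos[OF pos] by (simp add: S_def)
          have xjS: "x j \<le> S" using le_S[OF j pos] by (simp add: S_def)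
          have "x \<in> B \<longleftrightarrow> x j / (real m * S) \<le> t"
            using x unfolding B_def S_def by simp
          also have "\<dots> \<longleftrightarrow> x j \<le> t * (real m * S)"
            using Sp m0 by (intro pos_divide_le_eq) simp
          also have "\<dots> \<longleftrightarrow> x j \<le> real m * t * S"
            by (simp add: mult_ac)
          also have "\<dots> \<longleftrightarrow> x j \<le> y * S"
          proof (cases "real m * t \<le> 1")
            case True then show ?thesis by (simp add: y_def)
          next
            case False
            then have "S \<le> real m * t * S" using Sp by simp
            then show ?thesis using False xjS by (simp add: y_def)
          qed
          finally show ?thesis using True unfolding Qs_def T_def S_def by auto
        next
          case False
          then show ?thesis unfolding Qs_def T_def by auto
        qed
        then show "indicator T x * indicator B x = (indicator (Qs j y) x :: ennreal)"
          by (auto simp: indicator_def)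
      qed
      also have "\<dots> = ennreal (Z * y powr a)" by (rule Qj[OF j y0 y1])
      finally have I: "(\<integral>\<^sup>+x. indicator T x * indicator B x \<partial>\<nu>) = ennreal (Z * y powr a)" .
      have "enn2real (ennreal (1/Z) * ennreal (Z * y powr a)) = y powr a"
        using Z by (simp add: ennreal_mult'[symmetric])
      moreover have "Fk k m t = y powr a"
      proof -
        have e1: "real k / real (k * m) = 1 / real m" using k0 m0 by simp
        have e2: "real (k * m) / real k = real m" using k0 by simp
        show ?thesis
        proof (cases "real m * t \<le> 1")
          case True
          then have "t \<le> 1 / real m" using m0 by (simp add: field_simps)
          then show ?thesis using False True unfolding Fk_def e1 e2 y_def a_def by simp
        next
          case f2: False
          then have "\<not> t \<le> 1 / real m" using m0 by (simp add: field_simps)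
          then show ?thesis using False f2 unfolding Fk_def e1 e2 y_def a_def by simp
        qed
      qed
      ultimately show ?thesis using I by simp
    qed
    finally show "cdf (distr M borel (\<lambda>b. b i)) t = Fk k m t" .
  qed
qed


end
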